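(* Let $A$ be a physical system of dimension $m$ with Hamiltonian $H^A$ and an orthonormal energy eigenbasis $\{|x\rangle\}_{x=1}^m$. Let $\sigma$ be an arbitrary density matrix on $A$ and $p_x\coloneqq\langle x|\sigma|x\rangle$. Then the pure state $|\psi\rangle\coloneqq\sum_{x=1}^m\sqrt{p_x}|x\rangle$ can be converted to $\sigma$ by a time-translation covariant channel, i.e. there exists a time-translation covariant channel $\mathcal{E}:A\to A$ with $\mathcal{E}(|\psi\rangle\langle\psi|)=\sigma$.
   Context: A channel (CPTP map) $\mathcal{E}:A\to A$ is time-translation covariant if $\mathcal{E}(e^{-iH^At}\rho e^{iH^At})=e^{-iH^At}\mathcal{E}(\rho)e^{iH^At}$ for all $t\in\mathbb{R}$ and all states $\rho$ on $A$. *)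

theory Defs
  imports Complex_Main "Jordan_Normal_Form.Matrix"
begin

definition adj :: "complex mat \<Rightarrow> complex mat" where
  "adj A = mat (dim_col A) (dim_row A) (\<lambda>(i,j). cnj (A $$ (j,i)))"

definition mtrace :: "complex mat \<Rightarrow> complex" where
  "mtrace A = (\<Sum>i<dim_row A. A $$ (i,i))"

definition hermitian_mat :: "nat \<Rightarrow> complex mat \<Rightarrow> bool" where
  "hermitian_mat n A \<longleftrightarrow> A \<in> carrier_mat n n \<and> adj A = A"

definition unitary_mat :: "nat \<Rightarrow> complex mat \<Rightarrow> bool" where
  "unitary_mat n U \<longleftrightarrow> U \<in> carrier_mat n n \<and> adj U * U = 1\<^sub>m n \<and> U * adj U = 1\<^sub>m n"

definition psd_mat :: "nat \<Rightarrow> complex mat \<Rightarrow> bool" where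
  "psd_mat n A \<longleftrightarrow> A \<in> carrier_mat n n \<and>
     (\<forall>v \<in> carrier_vec n. (\<Sum>i<n. \<Sum>j<n. cnj (v $ i) * A $$ (i,j) * v $ j) \<in> \<real> \<and>
                            0 \<le> Re (\<Sum>i<n. \<Sum>j<n. cnj (v $ i) * A $$ (i,j) * v $ j))"

definition density_mat :: "nat \<Rightarrow> complex mat \<Rightarrow> bool" where
  "density_mat n \<rho> \<longleftrightarrow> psd_mat n \<rho> \<and> mtrace \<rho> = 1"

definition mexp :: "complex mat \<Rightarrow> complex mat" where
  "mexp A = mat (dim_row A) (dim_col A) (\<lambda>(i,j). \<Sum>k. (A ^\<^sub>m k) $$ (i,j) / of_nat (fact k))"

text \<open>(id_k \<otimes> E) applied to a (k*m)x(k*m) matrix, viewed as k x k blocks of m x m matrices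
  (ancilla index a, system index r, combined index a*m + r).\<close>
definition ext_map :: "nat \<Rightarrow> nat \<Rightarrow> (complex mat \<Rightarrow> complex mat) \<Rightarrow> complex mat \<Rightarrow> complex mat" where
  "ext_map k m E X = mat (k*m) (k*m) (\<lambda>(i,j).
      E (mat m m (\<lambda>(r,s). X $$ ((i div m) * m + r, (j div m) * m + s))) $$ (i mod m, j mod m))"

definition channel :: "nat \<Rightarrow> (complex mat \<Rightarrow> complex mat) \<Rightarrow> bool" where
  "channel m E \<longleftrightarrow>
     (\<forall>X \<in> carrier_mat m m. E X \<in> carrier_mat m m) \<and>
     (\<forall>X \<in> carrier_mat m m. \<forall>Y \<in> carrier_mat m m. \<forall>a b :: complex.
        E (a \<cdot>\<^sub>m X + b \<cdot>\<^sub>m Y) = a \<cdot>\<^sub>m E X + b \<cdot>\<^sub>m E Y) \<and>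
     (\<forall>X \<in> carrier_mat m m. mtrace (E X) = mtrace X) \<and>
     (\<forall>k X. psd_mat (k*m) X \<longrightarrow> psd_mat (k*m) (ext_map k m E X))"

definition time_evol :: "complex mat \<Rightarrow> real \<Rightarrow> complex mat" where
  "time_evol H t = mexp ((- \<i> * complex_of_real t) \<cdot>\<^sub>m H)"

definition time_cov :: "nat \<Rightarrow> complex mat \<Rightarrow> (complex mat \<Rightarrow> complex mat) \<Rightarrow> bool" where
  "time_cov m H E \<longleftrightarrow> (\<forall>t::real. \<forall>\<rho>. density_mat m \<rho> \<longrightarrow>
     E (time_evol H t * \<rho> * adj (time_evol H t)) = time_evol H t * E \<rho> * adj (time_evol H t))"

definition ket_bra :: "complex vec \<Rightarrow> complex mat" where
  "ket_bra v = mat (dim_vec v) (dim_vec v) (\<lambda>(i,j). v $ i * cnj (v $ j))"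

end

theory Submission
  imports Defs
begin

definition qf :: "nat \<Rightarrow> (nat \<Rightarrow> nat \<Rightarrow> complex) \<Rightarrow> (nat \<Rightarrow> complex) \<Rightarrow> complex" where
  "qf n A v = (\<Sum>i<n. \<Sum>j<n. cnj (v i) * A i j * v j)"

definition psdf :: "nat \<Rightarrow> (nat \<Rightarrow> nat \<Rightarrow> complex) \<Rightarrow> bool" where
  "psdf n A \<longleftrightarrow> (\<forall>v. qf n A v \<in> \<real> \<and> 0 \<le> Re (qf n A v))"

lemma sum_two_pts:
  assumes "i < (n::nat)" "j < n" "i \<noteq> j"
  shows "(\<Sum>l<n. (if l = i then x else if l = j then y else 0)) = (x + y :: complex)"
proof -
  have "(\<Sum>l<n. (if l = i then x else if l = j then y else 0)) =
        (\<Sum>l<n. (if l = i then x else 0) + (if l = j then y else 0))"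
    by (rule sum.cong) (use assms in auto)
  also have "\<dots> = x + y" using assms by (simp add: sum.distrib)
  finally show ?thesis .
qed

lemma qf_two:
  assumes "i < n" "j < n" "i \<noteq> j"
  shows "qf n A (\<lambda>k. if k = i then a else if k = j then b else 0) =
    cnj a * A i i * a + cnj a * A i j * b + cnj b * A j i * a + cnj b * A j j * b"
proof -
  let ?v = "\<lambda>k. if k = i then a else if k = j then b else 0"
  have inner: "(\<Sum>l<n. cnj (?v k) * A k l * ?v l) = cnj (?v k) * A k i * a + cnj (?v k) * A k j * b" for k
  proof -
    have "(\<Sum>l<n. cnj (?v k) * A k l * ?v l) = (\<Sum>l<n. (if l = i then cnj (?v k) * A k i * a else if l = j then cnj (?v k) * A k j * b else 0))"
      by (rule sum.cong) auto
    then show ?thesis using sum_two_pts[OF assms] by simp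
  qed
  have "qf n A ?v = (\<Sum>k<n. cnj (?v k) * A k i * a + cnj (?v k) * A k j * b)"
    unfolding qf_def using inner by simp
  also have "\<dots> = (\<Sum>k<n. (if k = i then cnj a * A i i * a + cnj a * A i j * b else if k = j then cnj b * A j i * a + cnj b * A j j * b else 0))"
    by (rule sum.cong) (use assms in auto)
  also have "\<dots> = cnj a * A i i * a + cnj a * A i j * b + (cnj b * A j i * a + cnj b * A j j * b)" using sum_two_pts[OF assms] by simp
  finally show ?thesis by (simp add: algebra_simps)
qed

lemma qf_one:
  assumes "i < n"
  shows "qf n A (\<lambda>k. if k = i then a else 0) = cnj a * A i i * a"
proof -
  have "qf n A (\<lambda>k. if k = i then a else 0) = (\<Sum>k<n. (if k = i then cnj a * A i i * a else 0))"
    unfolding qf_def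
    by (rule sum.cong) (auto simp: if_distrib cong: if_cong)
  then show ?thesis using assms by simp
qed

lemma psdf_herm:
  assumes "psdf n A" "i < n" "j < n"
  shows "A j i = cnj (A i j)"
proof -
  have Q: "qf n A v \<in> \<real>" for v using assms(1) unfolding psdf_def by blast
  have rii: "A i i \<in> \<real>" using Q[of "\<lambda>k. if k = i then 1 else 0"] qf_one[OF assms(2), of A 1] by simp
  have rjj: "A j j \<in> \<real>" using Q[of "\<lambda>k. if k = j then 1 else 0"] qf_one[OF assms(3), of A 1] by simp
  show ?thesis
  proof (cases "i = j")
    case True
    then show ?thesis using rii by (metis Reals_cnj_iff)
  next
    case False
    have r1: "A i i + A i j + A j i + A j j \<in> \<real>"
      using Q[of "\<lambda>k. if k = i then 1 else if k = j then 1 else 0"] qf_two[OF assms(2,3) False, of A 1 1] by simp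
    have r2: "A i i + A i j * \<i> - \<i> * A j i + A j j \<in> \<real>"
      using Q[of "\<lambda>k. if k = i then 1 else if k = j then \<i> else 0"] qf_two[OF assms(2,3) False, of A 1 \<i>] by (simp add: algebra_simps)
    have "Im (A i j + A j i) = 0" using r1 rii rjj by (simp add: complex_is_Real_iff)
    moreover have "Re (A i j - A j i) = 0" using r2 rii rjj by (simp add: complex_is_Real_iff)
    ultimately show ?thesis by (simp add: complex_eq_iff)
  qed
qed

lemma qf_Suc:
  "qf (Suc n) A w = qf n A w + (\<Sum>i<n. cnj (w i) * A i n) * w n
     + cnj (w n) * (\<Sum>j<n. A n j * w j) + cnj (w n) * A n n * w n"
  by (simp add: qf_def sum.distrib sum_distrib_left sum_distrib_right algebra_simps)

lemma qf_cong: "(\<And>i. i < n \<Longrightarrow> v i = w i) \<Longrightarrow> qf n A v = qf n A w"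
  unfolding qf_def by (intro sum.cong) auto

lemma psdf_restrict: assumes "psdf (Suc n) A" shows "psdf n A"
  unfolding psdf_def
proof
  fix v :: "nat \<Rightarrow> complex"
  let ?w = "\<lambda>k. if k < n then v k else 0"
  have "qf (Suc n) A ?w = qf n A ?w"
    by (simp add: qf_Suc)
  also have "qf n A ?w = qf n A v" by (rule qf_cong) simp
  finally have "qf (Suc n) A ?w = qf n A v" .
  then show "qf n A v \<in> \<real> \<and> 0 \<le> Re (qf n A v)" using assms unfolding psdf_def by metis
qed

lemma psdf_diag: assumes "psdf n A" "i < n" shows "A i i \<in> \<real>" "0 \<le> Re (A i i)"
  using assms qf_one[OF assms(2), of A 1] unfolding psdf_def by (metis mult_1 mult_1_right complex_cnj_one)+

lemma psdf_zero_diag: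
  assumes "psdf n A" "i < n" "j < n" "A j j = 0"
  shows "A i j = 0"
proof (rule ccontr)
  assume B0: "A i j \<noteq> 0"
  then have ij: "i \<noteq> j" using assms(4) by auto
  define B where "B = A i j"
  define c where "c = cmod B ^ 2"
  have c0: "c > 0" using B0 unfolding c_def B_def by simp
  define s where "s = (Re (A i i) + 1) / (2 * c)"
  define t where "t = - complex_of_real s * cnj B"
  have herm: "A j i = cnj B" using psdf_herm[OF assms(1,2,3)] B_def by simp
  have "qf n A (\<lambda>k. if k = i then 1 else if k = j then t else 0) = A i i + B * t + cnj t * cnj B"
    using qf_two[OF assms(2,3) ij, of A 1 t] herm assms(4) B_def by simp
  also have "\<dots> = A i i - 2 * complex_of_real s * (B * cnj B)"
    unfolding t_def by (simp add: algebra_simps)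
  also have "B * cnj B = complex_of_real c" unfolding c_def by (simp add: complex_mult_cnj cmod_def)
  finally have "Re (qf n A (\<lambda>k. if k = i then 1 else if k = j then t else 0)) = Re (A i i) - 2 * s * c"
    by simp
  also have "\<dots> = -1" unfolding s_def using c0 by (simp add: field_simps)
  finally show False using assms(1) unfolding psdf_def by (metis neg_0_le_iff_le not_one_le_zero)
qed

lemma psdf_schur:
  assumes "psdf (Suc n) A" "A n n \<noteq> 0"
  shows "psdf n (\<lambda>x y. A x y - A x n * A n y / A n n)"
  unfolding psdf_def
proof
  fix v :: "nat \<Rightarrow> complex"
  define d where "d = A n n"
  define \<alpha> where "\<alpha> = (\<Sum>j<n. A n j * v j)"
  define \<beta> where "\<beta> = (\<Sum>i<n. cnj (v i) * A i n)"
  define t where "t = - \<alpha> / d"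
  let ?w = "\<lambda>k. if k < n then v k else if k = n then t else 0"
  have d0: "d \<noteq> 0" using assms(2) d_def by simp
  have e1: "qf (Suc n) A ?w = qf n A ?w + \<beta> * t + (cnj t * \<alpha> + cnj t * d * t)"
    unfolding qf_Suc \<alpha>_def \<beta>_def d_def by simp
  have e2: "qf n A ?w = qf n A v" by (rule qf_cong) simp
  have e3: "cnj t * \<alpha> + cnj t * d * t = 0" unfolding t_def using d0 by (simp add: field_simps)
  have 1: "qf (Suc n) A ?w = qf n A v + \<beta> * t" using e1 e2 e3 by simp
  have "qf n (\<lambda>x y. A x y - A x n * A n y / A n n) v = qf n A v - (\<Sum>i<n. \<Sum>j<n. cnj (v i) * A i n * (A n j * v j)) / d"
    unfolding qf_def d_def by (simp add: sum_subtractf sum_divide_distrib algebra_simps)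
  also have "(\<Sum>i<n. \<Sum>j<n. cnj (v i) * A i n * (A n j * v j)) = \<beta> * \<alpha>"
    unfolding \<alpha>_def \<beta>_def by (simp add: sum_product)
  finally have 2: "qf n (\<lambda>x y. A x y - A x n * A n y / A n n) v = qf (Suc n) A ?w"
    using 1 unfolding t_def by simp
  show "qf n (\<lambda>x y. A x y - A x n * A n y / A n n) v \<in> \<real> \<and> 0 \<le> Re (qf n (\<lambda>x y. A x y - A x n * A n y / A n n) v)"
    unfolding 2 using assms(1) unfolding psdf_def by blast
qed

lemma mult_entry:
  assumes "A \<in> carrier_mat a n" "B \<in> carrier_mat n b" "i < a" "j < b"
  shows "(A * B) $$ (i,j) = (\<Sum>k<n. A $$ (i,k) * B $$ (k,j))"
  using assms by (auto simp: scalar_prod_def atLeast0LessThan intro!: sum.cong)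

lemma triple_entry:
  assumes "A \<in> carrier_mat a n" "B \<in> carrier_mat n p" "C \<in> carrier_mat p b" "i < a" "j < b"
  shows "(A * B * C) $$ (i,j) = (\<Sum>x<n. \<Sum>y<p. A $$ (i,x) * B $$ (x,y) * C $$ (y,j))"
proof -
  have AB: "A * B \<in> carrier_mat a p" using assms by simp
  have "(A * B * C) $$ (i,j) = (\<Sum>y<p. (A * B) $$ (i,y) * C $$ (y,j))"
    using mult_entry[OF AB assms(3,4,5)] .
  also have "\<dots> = (\<Sum>y<p. (\<Sum>x<n. A $$ (i,x) * B $$ (x,y)) * C $$ (y,j))"
    using mult_entry[OF assms(1,2) assms(4)] by simp
  also have "\<dots> = (\<Sum>y<p. \<Sum>x<n. A $$ (i,x) * B $$ (x,y) * C $$ (y,j))"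
    by (simp add: sum_distrib_right)
  also have "\<dots> = (\<Sum>x<n. \<Sum>y<p. A $$ (i,x) * B $$ (x,y) * C $$ (y,j))"
    by (rule sum.swap)
  finally show ?thesis .
qed

lemma adj_carrier[simp]: "A \<in> carrier_mat a b \<Longrightarrow> adj A \<in> carrier_mat b a"
  unfolding adj_def by simp

lemma adj_dims[simp]: "dim_row (adj A) = dim_col A" "dim_col (adj A) = dim_row A"
  unfolding adj_def by simp_all

lemma index_adj[simp]: "i < dim_col A \<Longrightarrow> j < dim_row A \<Longrightarrow> adj A $$ (i,j) = cnj (A $$ (j,i))"
  unfolding adj_def by simp

definition dg :: "nat \<Rightarrow> (nat \<Rightarrow> complex) \<Rightarrow> complex mat" where
  "dg m f = mat m m (\<lambda>(i,j). if i = j then f i else 0)"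

lemma dg_carrier[simp]: "dg m f \<in> carrier_mat m m" unfolding dg_def by simp
lemma dg_dims[simp]: "dim_row (dg m f) = m" "dim_col (dg m f) = m" unfolding dg_def by simp_all
lemma index_dg[simp]: "i < m \<Longrightarrow> j < m \<Longrightarrow> dg m f $$ (i,j) = (if i = j then f i else 0)"
  unfolding dg_def by simp

lemma dg_mult: "dg m f * dg m g = dg m (\<lambda>i. f i * g i)"
proof (rule eq_matI)
  fix i j assume ij: "i < dim_row (dg m (\<lambda>i. f i * g i))" "j < dim_col (dg m (\<lambda>i. f i * g i))"
  then have i: "i < m" and j: "j < m" by auto
  have "(dg m f * dg m g) $$ (i,j) = (\<Sum>k<m. (if i = k then f i else 0) * (if k = j then g k else 0))"
    using mult_entry[OF dg_carrier dg_carrier i j] i j by (auto intro!: sum.cong)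
  also have "\<dots> = (\<Sum>k<m. (if k = i then (if i = j then f i * g i else 0) else 0))"
    by (rule sum.cong) auto
  also have "\<dots> = dg m (\<lambda>i. f i * g i) $$ (i,j)" using i j by simp
  finally show "(dg m f * dg m g) $$ (i,j) = dg m (\<lambda>i. f i * g i) $$ (i,j)" .
qed auto

lemma dg_one: "dg m (\<lambda>_. 1) = 1\<^sub>m m"
  by (rule eq_matI) auto

lemma Wm_entry:
  assumes "U \<in> carrier_mat m m" "r < m" "s < m"
  shows "(U * dg m f * adj U) $$ (r,s) = (\<Sum>x<m. U $$ (r,x) * f x * cnj (U $$ (s,x)))"
proof -
  have "(U * dg m f * adj U) $$ (r,s) = (\<Sum>x<m. \<Sum>y<m. U $$ (r,x) * dg m f $$ (x,y) * adj U $$ (y,s))"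
    using triple_entry[OF assms(1) dg_carrier adj_carrier[OF assms(1)] assms(2,3)] .
  also have "\<dots> = (\<Sum>x<m. \<Sum>y<m. (if y = x then U $$ (r,x) * f x * cnj (U $$ (s,x)) else 0))"
    using assms by (intro sum.cong refl) auto
  also have "\<dots> = (\<Sum>x<m. U $$ (r,x) * f x * cnj (U $$ (s,x)))" by simp
  finally show ?thesis .
qed

lemma conj_entry:
  assumes "U \<in> carrier_mat m m" "S \<in> carrier_mat m m" "r < m" "s < m"
  shows "(U * S * adj U) $$ (r,s) = (\<Sum>x<m. \<Sum>y<m. U $$ (r,x) * S $$ (x,y) * cnj (U $$ (s,y)))"
  using triple_entry[OF assms(1,2) adj_carrier[OF assms(1)] assms(3,4)] assms by (auto intro!: sum.cong)

lemma unit_orth1: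
  assumes "unitary_mat m U" "x < m" "y < m"
  shows "(\<Sum>i<m. cnj (U $$ (i,x)) * U $$ (i,y)) = (if x = y then 1 else 0)"
proof -
  have U: "U \<in> carrier_mat m m" "adj U * U = 1\<^sub>m m" using assms unfolding unitary_mat_def by auto
  have "(adj U * U) $$ (x,y) = (\<Sum>i<m. adj U $$ (x,i) * U $$ (i,y))"
    using mult_entry[OF adj_carrier[OF U(1)] U(1) assms(2,3)] .
  also have "\<dots> = (\<Sum>i<m. cnj (U $$ (i,x)) * U $$ (i,y))" using U(1) assms by (auto intro!: sum.cong)
  finally show ?thesis using U(2) assms by simp
qed

lemma unit_orth2:
  assumes "unitary_mat m U" "r < m" "s < m"
  shows "(\<Sum>x<m. U $$ (r,x) * cnj (U $$ (s,x))) = (if r = s then 1 else 0)"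
proof -
  have U: "U \<in> carrier_mat m m" "U * adj U = 1\<^sub>m m" using assms unfolding unitary_mat_def by auto
  have "(U * adj U) $$ (r,s) = (\<Sum>x<m. U $$ (r,x) * adj U $$ (x,s))"
    using mult_entry[OF U(1) adj_carrier[OF U(1)] assms(2,3)] .
  also have "\<dots> = (\<Sum>x<m. U $$ (r,x) * cnj (U $$ (s,x)))" using U(1) assms by (auto intro!: sum.cong)
  finally show ?thesis using U(2) assms by simp
qed

lemma Wm_mult:
  assumes "unitary_mat m U"
  shows "(U * dg m f * adj U) * (U * dg m g * adj U) = U * dg m (\<lambda>i. f i * g i) * adj U"
proof -
  have U: "U \<in> carrier_mat m m" "adj U * U = 1\<^sub>m m" using assms unfolding unitary_mat_def by auto
  have aU: "adj U \<in> carrier_mat m m" using U(1) by simp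
  have "(U * dg m f * adj U) * (U * dg m g * adj U) = U * dg m f * (adj U * U) * dg m g * adj U"
    using U(1) aU by (simp add: assoc_mult_mat[of _ m m _ m _ m] mult_carrier_mat[of _ m m _ m])
  also have "\<dots> = U * (dg m f * dg m g) * adj U"
    using U by (simp add: assoc_mult_mat[of _ m m _ m _ m] mult_carrier_mat[of _ m m _ m])
  finally show ?thesis by (simp add: dg_mult)
qed

lemma adj_Wm:
  assumes "U \<in> carrier_mat m m"
  shows "adj (U * dg m f * adj U) = U * dg m (\<lambda>i. cnj (f i)) * adj U"
proof (rule eq_matI)
  fix r s assume "r < dim_row (U * dg m (\<lambda>i. cnj (f i)) * adj U)" "s < dim_col (U * dg m (\<lambda>i. cnj (f i)) * adj U)"
  then have r: "r < m" and s: "s < m" using assms by auto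
  have "adj (U * dg m f * adj U) $$ (r,s) = cnj ((U * dg m f * adj U) $$ (s,r))"
    using assms r s by simp
  also have "\<dots> = (\<Sum>x<m. U $$ (r,x) * cnj (f x) * cnj (U $$ (s,x)))"
    unfolding Wm_entry[OF assms s r] by (simp add: algebra_simps)
  also have "\<dots> = (U * dg m (\<lambda>i. cnj (f i)) * adj U) $$ (r,s)"
    unfolding Wm_entry[OF assms r s] ..
  finally show "adj (U * dg m f * adj U) $$ (r,s) = (U * dg m (\<lambda>i. cnj (f i)) * adj U) $$ (r,s)" .
qed (use assms in auto)

lemma Wm_pow:
  assumes "unitary_mat m U"
  shows "(U * dg m f * adj U) ^\<^sub>m k = U * dg m (\<lambda>i. f i ^ k) * adj U"
proof (induction k)
  case 0
  have U: "U \<in> carrier_mat m m" "U * adj U = 1\<^sub>m m" using assms unfolding unitary_mat_def by auto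
  then show ?case using U by (simp add: dg_one)
next
  case (Suc k)
  then show ?case using Wm_mult[OF assms] by (simp add: mult.commute)
qed

lemma Wm_smult:
  assumes "U \<in> carrier_mat m m"
  shows "c \<cdot>\<^sub>m (U * dg m f * adj U) = U * dg m (\<lambda>i. c * f i) * adj U"
proof (rule eq_matI)
  fix r s assume "r < dim_row (U * dg m (\<lambda>i. c * f i) * adj U)" "s < dim_col (U * dg m (\<lambda>i. c * f i) * adj U)"
  then have r: "r < m" and s: "s < m" using assms by auto
  have "(c \<cdot>\<^sub>m (U * dg m f * adj U)) $$ (r,s) = c * (U * dg m f * adj U) $$ (r,s)" using r s assms by simp
  also have "\<dots> = (U * dg m (\<lambda>i. c * f i) * adj U) $$ (r,s)"
    unfolding Wm_entry[OF assms r s] by (simp add: sum_distrib_left algebra_simps)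
  finally show "(c \<cdot>\<^sub>m (U * dg m f * adj U)) $$ (r,s) = (U * dg m (\<lambda>i. c * f i) * adj U) $$ (r,s)" .
qed (use assms in auto)

lemma exp_sums_c: "(\<lambda>k. z ^ k / of_nat (fact k)) sums exp (z::complex)"
  using exp_converges[of z] by (simp add: scaleR_conv_of_real divide_inverse_commute)

lemma mexp_Wm:
  assumes "unitary_mat m U"
  shows "mexp (U * dg m f * adj U) = U * dg m (\<lambda>i. exp (f i)) * adj U"
proof -
  have U: "U \<in> carrier_mat m m" using assms unfolding unitary_mat_def by auto
  show ?thesis
  proof (rule eq_matI)
    fix r s assume "r < dim_row (U * dg m (\<lambda>i. exp (f i)) * adj U)" "s < dim_col (U * dg m (\<lambda>i. exp (f i)) * adj U)"
    then have r: "r < m" and s: "s < m" using U by auto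
    have "(\<lambda>k. \<Sum>x<m. U $$ (r,x) * (f x ^ k / of_nat (fact k)) * cnj (U $$ (s,x))) sums
          (\<Sum>x<m. U $$ (r,x) * exp (f x) * cnj (U $$ (s,x)))"
      by (intro sums_sum sums_mult sums_mult2 exp_sums_c)
    moreover have "(\<lambda>k. \<Sum>x<m. U $$ (r,x) * (f x ^ k / of_nat (fact k)) * cnj (U $$ (s,x))) =
                   (\<lambda>k. ((U * dg m f * adj U) ^\<^sub>m k) $$ (r,s) / of_nat (fact k))"
      unfolding Wm_pow[OF assms] Wm_entry[OF U r s] by (simp add: sum_divide_distrib algebra_simps)
    ultimately have "(\<lambda>k. ((U * dg m f * adj U) ^\<^sub>m k) $$ (r,s) / of_nat (fact k)) sums
          (U * dg m (\<lambda>i. exp (f i)) * adj U) $$ (r,s)"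
      unfolding Wm_entry[OF U r s] by simp
    then have "(\<Sum>k. ((U * dg m f * adj U) ^\<^sub>m k) $$ (r,s) / of_nat (fact k)) = (U * dg m (\<lambda>i. exp (f i)) * adj U) $$ (r,s)"
      by (rule sums_unique[symmetric])
    then show "mexp (U * dg m f * adj U) $$ (r,s) = (U * dg m (\<lambda>i. exp (f i)) * adj U) $$ (r,s)"
      unfolding mexp_def using r s U by simp
  qed (use U in \<open>auto simp: mexp_def\<close>)
qed

lemma sum_swap_in: "(\<Sum>x\<in>A. \<Sum>y\<in>B. \<Sum>z\<in>C. f x y z) = (\<Sum>x\<in>A. \<Sum>z\<in>C. \<Sum>y\<in>B. f x y z)"
  by (rule sum.cong[OF refl]) (rule sum.swap)

lemma sum_rot3: "(\<Sum>r\<in>R. \<Sum>a\<in>A. \<Sum>b\<in>B. f r a b) = (\<Sum>a\<in>A. \<Sum>b\<in>B. \<Sum>r\<in>R. f r a b)"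
proof -
  have "(\<Sum>r\<in>R. \<Sum>a\<in>A. \<Sum>b\<in>B. f r a b) = (\<Sum>a\<in>A. \<Sum>r\<in>R. \<Sum>b\<in>B. f r a b)" by (rule sum.swap)
  also have "\<dots> = (\<Sum>a\<in>A. \<Sum>b\<in>B. \<Sum>r\<in>R. f r a b)" by (rule sum.cong[OF refl]) (rule sum.swap)
  finally show ?thesis .
qed

lemma sum4_swap: "(\<Sum>r\<in>R. \<Sum>s\<in>S. \<Sum>x\<in>X. \<Sum>y\<in>Y. f r s x y) = (\<Sum>x\<in>X. \<Sum>y\<in>Y. \<Sum>r\<in>R. \<Sum>s\<in>S. f r s x y)"
proof -
  have "(\<Sum>r\<in>R. \<Sum>s\<in>S. \<Sum>x\<in>X. \<Sum>y\<in>Y. f r s x y) = (\<Sum>r\<in>R. \<Sum>x\<in>X. \<Sum>s\<in>S. \<Sum>y\<in>Y. f r s x y)"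
    by (rule sum_swap_in)
  also have "\<dots> = (\<Sum>x\<in>X. \<Sum>r\<in>R. \<Sum>s\<in>S. \<Sum>y\<in>Y. f r s x y)" by (rule sum.swap)
  also have "\<dots> = (\<Sum>x\<in>X. \<Sum>y\<in>Y. \<Sum>r\<in>R. \<Sum>s\<in>S. f r s x y)"
    by (rule sum.cong[OF refl]) (rule sum_rot3[symmetric])
  finally show ?thesis .
qed

lemma sum_split_km: fixes k m :: nat and f :: "nat \<Rightarrow> 'a::comm_monoid_add" shows "(\<Sum>i<k*m. f i) = (\<Sum>a<k. \<Sum>r<m. f (a*m + r))"
proof -
  have "(\<Sum>i<k*m. f i) = (\<Sum>a<k. sum f {a*m..<a*m+m})" using sum.nat_group[of f m k] by simp
  also have "\<dots> = (\<Sum>a<k. \<Sum>r<m. f (a*m + r))"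
  proof (rule sum.cong[OF refl])
    fix a
    have "sum f {0 + a*m..<m + a*m} = (\<Sum>r = 0..<m. f (r + a*m))" by (rule sum.shift_bounds_nat_ivl)
    then show "sum f {a*m..<a*m+m} = (\<Sum>r<m. f (a*m + r))"
      by (simp add: atLeast0LessThan add.commute)
  qed
  finally show ?thesis .
qed

lemma psd_fun:
  assumes "psd_mat n A"
  shows "(\<Sum>i<n. \<Sum>j<n. cnj (w i) * A $$ (i,j) * w j) \<in> \<real> \<and> 0 \<le> Re (\<Sum>i<n. \<Sum>j<n. cnj (w i) * A $$ (i,j) * w j)"
proof -
  have v: "vec n w \<in> carrier_vec n" by simp
  have all: "\<forall>v \<in> carrier_vec n. (\<Sum>i<n. \<Sum>j<n. cnj (v $ i) * A $$ (i,j) * v $ j) \<in> \<real> \<and>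
                            0 \<le> Re (\<Sum>i<n. \<Sum>j<n. cnj (v $ i) * A $$ (i,j) * v $ j)"
    using assms unfolding psd_mat_def by blast
  have eq: "(\<Sum>i<n. \<Sum>j<n. cnj (vec n w $ i) * A $$ (i,j) * vec n w $ j) = (\<Sum>i<n. \<Sum>j<n. cnj (w i) * A $$ (i,j) * w j)"
    by (intro sum.cong refl) simp
  show ?thesis using bspec[OF all v] unfolding eq .
qed

lemma prod3_sum: "(\<Sum>r\<in>R. a r) * (c::complex) * (\<Sum>s\<in>S. b s) = (\<Sum>r\<in>R. \<Sum>s\<in>S. a r * c * b s)"
  by (simp add: sum_distrib_left sum_distrib_right) (rule sum.swap)

lemma mid_sum2: "(a::complex) * (\<Sum>x\<in>X. \<Sum>y\<in>Y. f x y) * b = (\<Sum>x\<in>X. \<Sum>y\<in>Y. a * f x y * b)"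
  by (simp add: sum_distrib_left sum_distrib_right)

lemma quad_conj:
  fixes K Y :: "nat \<Rightarrow> nat \<Rightarrow> complex"
  shows "(\<Sum>r<m. \<Sum>s<m. cnj (v1 r) * (\<Sum>x<m. \<Sum>y<m. K r x * Y x y * cnj (K s y)) * v2 s) =
    (\<Sum>x<m. \<Sum>y<m. cnj (\<Sum>r<m. cnj (K r x) * v1 r) * Y x y * (\<Sum>s<m. cnj (K s y) * v2 s))"
proof -
  have "(\<Sum>r<m. \<Sum>s<m. cnj (v1 r) * (\<Sum>x<m. \<Sum>y<m. K r x * Y x y * cnj (K s y)) * v2 s) =
        (\<Sum>r<m. \<Sum>s<m. \<Sum>x<m. \<Sum>y<m. cnj (v1 r) * (K r x * Y x y * cnj (K s y)) * v2 s)"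
    by (simp only: mid_sum2)
  also have "\<dots> = (\<Sum>x<m. \<Sum>y<m. \<Sum>r<m. \<Sum>s<m. cnj (v1 r) * (K r x * Y x y * cnj (K s y)) * v2 s)"
    by (rule sum4_swap)
  also have "\<dots> = (\<Sum>x<m. \<Sum>y<m. cnj (\<Sum>r<m. cnj (K r x) * v1 r) * Y x y * (\<Sum>s<m. cnj (K s y) * v2 s))"
  proof (intro sum.cong refl)
    fix x y
    have "cnj (\<Sum>r<m. cnj (K r x) * v1 r) * Y x y * (\<Sum>s<m. cnj (K s y) * v2 s) =
          (\<Sum>r<m. K r x * cnj (v1 r)) * Y x y * (\<Sum>s<m. cnj (K s y) * v2 s)"
      by (simp add: cnj_sum)
    also have "\<dots> = (\<Sum>r<m. \<Sum>s<m. K r x * cnj (v1 r) * Y x y * (cnj (K s y) * v2 s))"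
      by (rule prod3_sum)
    finally show "(\<Sum>r<m. \<Sum>s<m. cnj (v1 r) * (K r x * Y x y * cnj (K s y)) * v2 s) =
          cnj (\<Sum>r<m. cnj (K r x) * v1 r) * Y x y * (\<Sum>s<m. cnj (K s y) * v2 s)"
      by (simp add: mult_ac)
  qed
  finally show ?thesis .
qed

definition kch :: "nat \<Rightarrow> nat \<Rightarrow> (nat \<Rightarrow> complex mat) \<Rightarrow> complex mat \<Rightarrow> complex mat" where
  "kch m N K X = mat m m (\<lambda>(r,s). \<Sum>l<N. (K l * X * adj (K l)) $$ (r,s))"

lemma kent:
  assumes "K \<in> carrier_mat m m" "X \<in> carrier_mat m m" "r < m" "s < m"
  shows "(K * X * adj K) $$ (r,s) = (\<Sum>x<m. \<Sum>y<m. K $$ (r,x) * X $$ (x,y) * cnj (K $$ (s,y)))"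
  using triple_entry[OF assms(1,2) adj_carrier[OF assms(1)] assms(3,4)] assms by (auto intro!: sum.cong)

lemma kch_carrier[simp]: "kch m N K X \<in> carrier_mat m m"
  unfolding kch_def by simp

lemma kch_dims[simp]: "dim_row (kch m N K X) = m" "dim_col (kch m N K X) = m"
  unfolding kch_def by simp_all

lemma index_kch: "r < m \<Longrightarrow> s < m \<Longrightarrow> kch m N K X $$ (r,s) = (\<Sum>l<N. (K l * X * adj (K l)) $$ (r,s))"
  unfolding kch_def by simp

lemma kch_linear:
  assumes K: "\<forall>l<N. K l \<in> carrier_mat m m" and X: "X \<in> carrier_mat m m" and Y: "Y \<in> carrier_mat m m"
  shows "kch m N K (a \<cdot>\<^sub>m X + b \<cdot>\<^sub>m Y) = a \<cdot>\<^sub>m kch m N K X + b \<cdot>\<^sub>m kch m N K Y"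
proof (rule eq_matI)
  fix r s assume "r < dim_row (a \<cdot>\<^sub>m kch m N K X + b \<cdot>\<^sub>m kch m N K Y)" "s < dim_col (a \<cdot>\<^sub>m kch m N K X + b \<cdot>\<^sub>m kch m N K Y)"
  then have r: "r < m" and s: "s < m" by auto
  have Z: "a \<cdot>\<^sub>m X + b \<cdot>\<^sub>m Y \<in> carrier_mat m m" using X Y by simp
  have "kch m N K (a \<cdot>\<^sub>m X + b \<cdot>\<^sub>m Y) $$ (r,s) =
     (\<Sum>l<N. \<Sum>x<m. \<Sum>y<m. K l $$ (r,x) * (a * X $$ (x,y) + b * Y $$ (x,y)) * cnj (K l $$ (s,y)))"
    unfolding index_kch[OF r s] using K X Y r s by (auto simp: kent[OF _ Z] intro!: sum.cong)
  also have "\<dots> = a * (\<Sum>l<N. \<Sum>x<m. \<Sum>y<m. K l $$ (r,x) * X $$ (x,y) * cnj (K l $$ (s,y)))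
     + b * (\<Sum>l<N. \<Sum>x<m. \<Sum>y<m. K l $$ (r,x) * Y $$ (x,y) * cnj (K l $$ (s,y)))"
    by (simp add: algebra_simps sum.distrib sum_distrib_left)
  also have "\<dots> = (a \<cdot>\<^sub>m kch m N K X + b \<cdot>\<^sub>m kch m N K Y) $$ (r,s)"
  proof -
    have kX: "(\<Sum>l<N. (K l * X * adj (K l)) $$ (r,s)) = (\<Sum>l<N. \<Sum>x<m. \<Sum>y<m. K l $$ (r,x) * X $$ (x,y) * cnj (K l $$ (s,y)))"
      using K X r s by (intro sum.cong refl) (simp add: kent)
    have kY: "(\<Sum>l<N. (K l * Y * adj (K l)) $$ (r,s)) = (\<Sum>l<N. \<Sum>x<m. \<Sum>y<m. K l $$ (r,x) * Y $$ (x,y) * cnj (K l $$ (s,y)))"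
      using K Y r s by (intro sum.cong refl) (simp add: kent)
    show ?thesis using r s by (simp add: index_kch kX kY)
  qed
  finally show "kch m N K (a \<cdot>\<^sub>m X + b \<cdot>\<^sub>m Y) $$ (r,s) = (a \<cdot>\<^sub>m kch m N K X + b \<cdot>\<^sub>m kch m N K Y) $$ (r,s)" .
qed auto

lemma kch_trace:
  assumes K: "\<forall>l<N. K l \<in> carrier_mat m m" and X: "X \<in> carrier_mat m m"
    and nrm: "\<forall>a<m. \<forall>b<m. (\<Sum>l<N. \<Sum>r<m. cnj (K l $$ (r,b)) * K l $$ (r,a)) = (if a = b then 1 else 0)"
  shows "mtrace (kch m N K X) = mtrace X"
proof -
  have "mtrace (kch m N K X) = (\<Sum>r<m. \<Sum>l<N. \<Sum>a<m. \<Sum>b<m. K l $$ (r,a) * X $$ (a,b) * cnj (K l $$ (r,b)))"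
    unfolding mtrace_def using K X by (auto simp: index_kch kent intro!: sum.cong)
  also have "\<dots> = (\<Sum>l<N. \<Sum>r<m. \<Sum>a<m. \<Sum>b<m. K l $$ (r,a) * X $$ (a,b) * cnj (K l $$ (r,b)))"
    by (rule sum.swap)
  also have "\<dots> = (\<Sum>l<N. \<Sum>a<m. \<Sum>b<m. \<Sum>r<m. K l $$ (r,a) * X $$ (a,b) * cnj (K l $$ (r,b)))"
    by (rule sum.cong[OF refl]) (rule sum_rot3)
  also have "\<dots> = (\<Sum>a<m. \<Sum>b<m. \<Sum>l<N. \<Sum>r<m. K l $$ (r,a) * X $$ (a,b) * cnj (K l $$ (r,b)))"
    by (rule sum_rot3)
  also have "\<dots> = (\<Sum>a<m. \<Sum>b<m. X $$ (a,b) * (\<Sum>l<N. \<Sum>r<m. cnj (K l $$ (r,b)) * K l $$ (r,a)))"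
    by (intro sum.cong refl) (simp add: sum_distrib_left mult_ac)
  also have "\<dots> = (\<Sum>a<m. \<Sum>b<m. X $$ (a,b) * (if a = b then 1 else 0))"
    using nrm by (intro sum.cong refl) simp
  also have "\<dots> = (\<Sum>a<m. X $$ (a,a))"
    by (intro sum.cong refl) (simp add: if_distrib cong: if_cong)
  also have "\<dots> = mtrace X" unfolding mtrace_def using X by simp
  finally show ?thesis .
qed

lemma kch_cov:
  assumes K: "\<forall>l<N. K l \<in> carrier_mat m m" and V: "V \<in> carrier_mat m m" and R: "\<rho> \<in> carrier_mat m m"
    and comm: "\<forall>l<N. K l * V = V * K l \<and> adj V * adj (K l) = adj (K l) * adj V"
  shows "kch m N K (V * \<rho> * adj V) = V * kch m N K \<rho> * adj V"
proof (rule eq_matI)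
  fix r s assume "r < dim_row (V * kch m N K \<rho> * adj V)" "s < dim_col (V * kch m N K \<rho> * adj V)"
  then have r: "r < m" and s: "s < m" using V by auto
  have aV: "adj V \<in> carrier_mat m m" using V by simp
  have mid: "K l * (V * \<rho> * adj V) * adj (K l) = V * (K l * \<rho> * adj (K l)) * adj V" if l: "l < N" for l
  proof -
    have Kl: "K l \<in> carrier_mat m m" and aK: "adj (K l) \<in> carrier_mat m m" using K l by auto
    have "K l * (V * \<rho> * adj V) * adj (K l) = (K l * V) * \<rho> * (adj V * adj (K l))"
      using Kl aK V aV R by (simp add: assoc_mult_mat[of _ m m _ m _ m] mult_carrier_mat[of _ m m _ m])
    also have "\<dots> = (V * K l) * \<rho> * (adj (K l) * adj V)" using comm l by simp
    also have "\<dots> = V * (K l * \<rho> * adj (K l)) * adj V"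
      using Kl aK V aV R by (simp add: assoc_mult_mat[of _ m m _ m _ m] mult_carrier_mat[of _ m m _ m])
    finally show ?thesis .
  qed
  have "kch m N K (V * \<rho> * adj V) $$ (r,s) = (\<Sum>l<N. (V * (K l * \<rho> * adj (K l)) * adj V) $$ (r,s))"
    unfolding index_kch[OF r s] using mid by (intro sum.cong refl) simp
  also have "\<dots> = (\<Sum>l<N. \<Sum>x<m. \<Sum>y<m. V $$ (r,x) * (K l * \<rho> * adj (K l)) $$ (x,y) * cnj (V $$ (s,y)))"
  proof (intro sum.cong refl)
    fix l assume "l \<in> {..<N}"
    then have Kl: "K l \<in> carrier_mat m m" using K by auto
    then have "K l * \<rho> * adj (K l) \<in> carrier_mat m m" using R by (metis adj_carrier mult_carrier_mat)
    then show "(V * (K l * \<rho> * adj (K l)) * adj V) $$ (r,s) = (\<Sum>x<m. \<Sum>y<m. V $$ (r,x) * (K l * \<rho> * adj (K l)) $$ (x,y) * cnj (V $$ (s,y)))"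
      using kent[OF V _ r s] by blast
  qed
  also have "\<dots> = (\<Sum>x<m. \<Sum>y<m. \<Sum>l<N. V $$ (r,x) * (K l * \<rho> * adj (K l)) $$ (x,y) * cnj (V $$ (s,y)))"
    by (rule sum_rot3)
  also have "\<dots> = (\<Sum>x<m. \<Sum>y<m. V $$ (r,x) * kch m N K \<rho> $$ (x,y) * cnj (V $$ (s,y)))"
    by (intro sum.cong refl) (simp add: index_kch sum_distrib_left sum_distrib_right)
  also have "\<dots> = (V * kch m N K \<rho> * adj V) $$ (r,s)"
    using kent[OF V kch_carrier r s] by simp
  finally show "kch m N K (V * \<rho> * adj V) $$ (r,s) = (V * kch m N K \<rho> * adj V) $$ (r,s)" .
qed (use V in auto)

lemma divmod_km:
  fixes a r m :: nat
  assumes "r < m"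
  shows "(a*m + r) div m = a" "(a*m + r) mod m = r"
  using assms by (auto simp: div_mult_self3 mod_mult_self3)

lemma split2:
  fixes k m :: nat
  shows "(\<Sum>i<k*m. \<Sum>j<k*m. F i j) = (\<Sum>a<k. \<Sum>r<m. \<Sum>b<k. \<Sum>s<m. (F (a*m+r) (b*m+s) :: complex))"
  by (simp only: sum_split_km)

lemma kraus1_eq:
  fixes w W :: "nat \<Rightarrow> complex" and k m :: nat
  assumes K: "K \<in> carrier_mat m m"
    and W: "\<And>i. W i = (\<Sum>r<m. cnj (K $$ (r, i mod m)) * w (i div m * m + r))"
  shows "(\<Sum>i<k*m. \<Sum>j<k*m. cnj (w i) * (K * mat m m (\<lambda>(r,s). X $$ (i div m * m + r, j div m * m + s)) * adj K) $$ (i mod m, j mod m) * w j)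
   = (\<Sum>i<k*m. \<Sum>j<k*m. cnj (W i) * X $$ (i,j) * W j)"
proof -
  let ?B = "\<lambda>a b. mat m m (\<lambda>(r,s). X $$ (a * m + r, b * m + s))"
  let ?F = "\<lambda>i j. cnj (w i) * (K * mat m m (\<lambda>(r,s). X $$ (i div m * m + r, j div m * m + s)) * adj K) $$ (i mod m, j mod m) * w j"
  have "(\<Sum>i<k*m. \<Sum>j<k*m. ?F i j) = (\<Sum>a<k. \<Sum>r<m. \<Sum>b<k. \<Sum>s<m. ?F (a*m+r) (b*m+s))"
    by (rule split2)
  also have "\<dots> = (\<Sum>a<k. \<Sum>r<m. \<Sum>b<k. \<Sum>s<m. cnj (w (a*m+r)) *
      (\<Sum>x<m. \<Sum>y<m. K $$ (r,x) * X $$ (a*m+x, b*m+y) * cnj (K $$ (s,y))) * w (b*m+s))"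
  proof (intro sum.cong refl)
    fix a r b s assume r: "r \<in> {..<m}" and s: "s \<in> {..<m}"
    then have r': "r < m" and s': "s < m" by auto
    have Bc: "?B a b \<in> carrier_mat m m" by simp
    have "(K * ?B a b * adj K) $$ (r,s) = (\<Sum>x<m. \<Sum>y<m. K $$ (r,x) * X $$ (a*m+x, b*m+y) * cnj (K $$ (s,y)))"
      unfolding kent[OF K Bc r' s'] by (intro sum.cong refl) simp
    then show "?F (a*m+r) (b*m+s) = cnj (w (a*m+r)) *
      (\<Sum>x<m. \<Sum>y<m. K $$ (r,x) * X $$ (a*m+x, b*m+y) * cnj (K $$ (s,y))) * w (b*m+s)"
      using r' s' by (simp add: divmod_km[OF r'] divmod_km[OF s'])
  qed
  also have "\<dots> = (\<Sum>a<k. \<Sum>b<k. \<Sum>r<m. \<Sum>s<m. cnj (w (a*m+r)) *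
      (\<Sum>x<m. \<Sum>y<m. K $$ (r,x) * X $$ (a*m+x, b*m+y) * cnj (K $$ (s,y))) * w (b*m+s))"
    by (rule sum_swap_in)
  also have "\<dots> = (\<Sum>a<k. \<Sum>b<k. \<Sum>x<m. \<Sum>y<m. cnj (\<Sum>r<m. cnj (K $$ (r,x)) * w (a*m+r)) * X $$ (a*m+x, b*m+y) *
      (\<Sum>s<m. cnj (K $$ (s,y)) * w (b*m+s)))"
    by (rule sum.cong[OF refl], rule sum.cong[OF refl], rule quad_conj)
  also have "\<dots> = (\<Sum>a<k. \<Sum>b<k. \<Sum>x<m. \<Sum>y<m. cnj (W (a*m+x)) * X $$ (a*m+x, b*m+y) * W (b*m+y))"
  proof (intro sum.cong refl)
    fix a b x y assume x: "x \<in> {..<m}" and y: "y \<in> {..<m}"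
    then have x': "x < m" and y': "y < m" by auto
    show "cnj (\<Sum>r<m. cnj (K $$ (r,x)) * w (a*m+r)) * X $$ (a*m+x, b*m+y) *
      (\<Sum>s<m. cnj (K $$ (s,y)) * w (b*m+s)) = cnj (W (a*m+x)) * X $$ (a*m+x, b*m+y) * W (b*m+y)"
      unfolding W divmod_km[OF x'] divmod_km[OF y'] ..
  qed
  also have "\<dots> = (\<Sum>a<k. \<Sum>x<m. \<Sum>b<k. \<Sum>y<m. cnj (W (a*m+x)) * X $$ (a*m+x, b*m+y) * W (b*m+y))"
    by (rule sum_swap_in)
  also have "\<dots> = (\<Sum>i<k*m. \<Sum>j<k*m. cnj (W i) * X $$ (i,j) * W j)"
    by (rule split2[symmetric])
  finally show ?thesis .
qed

lemma kch_cp: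
  fixes k m :: nat
  assumes K: "\<forall>l<N. K l \<in> carrier_mat m m" and P: "psd_mat (k*m) X"
  shows "psd_mat (k*m) (ext_map k m (kch m N K) X)"
  unfolding psd_mat_def
proof (rule conjI)
  show "ext_map k m (kch m N K) X \<in> carrier_mat (k*m) (k*m)" unfolding ext_map_def by simp
  show "\<forall>v \<in> carrier_vec (k*m). (\<Sum>i<k*m. \<Sum>j<k*m. cnj (v $ i) * ext_map k m (kch m N K) X $$ (i,j) * v $ j) \<in> \<real> \<and>
     0 \<le> Re (\<Sum>i<k*m. \<Sum>j<k*m. cnj (v $ i) * ext_map k m (kch m N K) X $$ (i,j) * v $ j)"
  proof
  fix v :: "complex vec" assume v: "v \<in> carrier_vec (k*m)"
  let ?B = "\<lambda>i j. mat m m (\<lambda>(r,s). X $$ (i div m * m + r, j div m * m + s))"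
  let ?Q = "\<lambda>l. (\<Sum>i<k*m. \<Sum>j<k*m. cnj (v $ i) * (K l * ?B i j * adj (K l)) $$ (i mod m, j mod m) * v $ j)"
  have ent: "ext_map k m (kch m N K) X $$ (i,j) = (\<Sum>l<N. (K l * ?B i j * adj (K l)) $$ (i mod m, j mod m))"
    if "i < k*m" "j < k*m" for i j
  proof -
    have "m > 0" using that by (cases m) auto
    then have "i mod m < m" "j mod m < m" by auto
    then show ?thesis unfolding ext_map_def using that by (simp add: index_kch)
  qed
  have "(\<Sum>i<k*m. \<Sum>j<k*m. cnj (v $ i) * ext_map k m (kch m N K) X $$ (i,j) * v $ j) =
        (\<Sum>i<k*m. \<Sum>j<k*m. \<Sum>l<N. cnj (v $ i) * (K l * ?B i j * adj (K l)) $$ (i mod m, j mod m) * v $ j)"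
    using ent by (intro sum.cong refl) (simp add: sum_distrib_left sum_distrib_right)
  also have "\<dots> = (\<Sum>l<N. ?Q l)"
    by (rule sum_rot3[symmetric])
  finally have Qeq: "(\<Sum>i<k*m. \<Sum>j<k*m. cnj (v $ i) * ext_map k m (kch m N K) X $$ (i,j) * v $ j) = (\<Sum>l<N. ?Q l)" .
  have Ql: "?Q l \<in> \<real> \<and> 0 \<le> Re (?Q l)" if l: "l < N" for l
  proof -
    have Kl: "K l \<in> carrier_mat m m" using K l by auto
    define Wl where "Wl = (\<lambda>i. \<Sum>r<m. cnj (K l $$ (r, i mod m)) * v $ (i div m * m + r))"
    have e: "?Q l = (\<Sum>i<k*m. \<Sum>j<k*m. cnj (Wl i) * X $$ (i,j) * Wl j)"
      by (rule kraus1_eq[OF Kl, of Wl "\<lambda>i. v $ i"]) (simp add: Wl_def)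
    show ?thesis unfolding e by (rule psd_fun[OF P])
  qed
  have "(\<Sum>l<N. ?Q l) \<in> \<real>"
  proof (rule sum_in_Reals)
    fix l assume "l \<in> {..<N}" then show "?Q l \<in> \<real>" using Ql by blast
  qed
  moreover have "0 \<le> Re (\<Sum>l<N. ?Q l)"
  proof -
    have "0 \<le> (\<Sum>l<N. Re (?Q l))"
    proof (rule sum_nonneg)
      fix l assume "l \<in> {..<N}" then show "0 \<le> Re (?Q l)" using Ql by blast
    qed
    also have "(\<Sum>l<N. Re (?Q l)) = Re (\<Sum>l<N. ?Q l)" by (rule Re_sum[symmetric])
    finally show ?thesis .
  qed
  ultimately have "(\<Sum>i<k*m. \<Sum>j<k*m. cnj (v $ i) * ext_map k m (kch m N K) X $$ (i,j) * v $ j) \<in> \<real> \<and>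
     0 \<le> Re (\<Sum>i<k*m. \<Sum>j<k*m. cnj (v $ i) * ext_map k m (kch m N K) X $$ (i,j) * v $ j)"
    unfolding Qeq by blast
  then show "(\<Sum>i<k*m. \<Sum>j<k*m. cnj (v $ i) * ext_map k m (kch m N K) X $$ (i,j) * v $ j) \<in> \<real> \<and>
     0 \<le> Re (\<Sum>i<k*m. \<Sum>j<k*m. cnj (v $ i) * ext_map k m (kch m N K) X $$ (i,j) * v $ j)" .
  qed
qed

lemma chol:
  "psdf n A \<Longrightarrow> \<exists>(L::nat) G. \<forall>x<n. \<forall>y<n. A x y = (\<Sum>l<L. G l x * cnj (G l y))"
proof (induction n arbitrary: A)
  case 0
  then show ?case by auto
next
  case (Suc n A)
  have P: "psdf n A" using psdf_restrict[OF Suc.prems] .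
  have nn: "n < Suc n" by simp
  show ?case
  proof (cases "A n n = 0")
    case True
    have z1: "A x n = 0" if "x < Suc n" for x using psdf_zero_diag[OF Suc.prems that nn True] .
    have z2: "A n x = 0" if "x < Suc n" for x
    proof -
      have "A n x = cnj (A x n)" using psdf_herm[OF Suc.prems that nn] .
      then show ?thesis using z1[OF that] by simp
    qed
    from Suc.IH[OF P] obtain L :: nat and G where G: "\<forall>x<n. \<forall>y<n. A x y = (\<Sum>l<L. G l x * cnj (G l y))" by (elim exE) (erule that)
    define G' where "G' l x = (if x < n then G l x else 0)" for l x
    have fin: "\<forall>x<Suc n. \<forall>y<Suc n. A x y = (\<Sum>l<L. G' l x * cnj (G' l y))"
    proof (intro allI impI)
      fix x y assume x: "x < Suc n" and y: "y < Suc n"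
      show "A x y = (\<Sum>l<L. G' l x * cnj (G' l y))"
      proof (cases "x < n \<and> y < n")
        case True then show ?thesis using G unfolding G'_def by simp
      next
        case False
        then have "x = n \<or> y = n" using x y by auto
        then have "A x y = 0" using z1[OF x] z2[OF y] by blast
        moreover have "(\<Sum>l<L. G' l x * cnj (G' l y)) = 0" using False unfolding G'_def by (intro sum.neutral) auto
        ultimately show ?thesis by simp
      qed
    qed
    show ?thesis by (rule exI[where x=L], rule exI[where x=G'], rule fin)
  next
    case False
    define d where "d = A n n"
    have dR: "d \<in> \<real>" "0 \<le> Re d" using psdf_diag[OF Suc.prems nn] d_def by auto
    have d0: "d \<noteq> 0" using False d_def by simp
    have dre: "d = complex_of_real (Re d)" using of_real_Re[OF dR(1)] by simp
    have "Re d \<noteq> 0"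
    proof
      assume "Re d = 0"
      then have "d = 0" using dre by simp
      then show False using d0 by simp
    qed
    then have dpos: "Re d > 0" using dR(2) by linarith
    define sq where "sq = complex_of_real (sqrt (Re d))"
    have "sqrt (Re d) * sqrt (Re d) = Re d" using dpos by simp
    then have "complex_of_real (sqrt (Re d) * sqrt (Re d)) = d" using dre by simp
    then have sqsq: "sq * sq = d" unfolding sq_def by (simp only: of_real_mult)
    have cnjsq: "cnj sq = sq" unfolding sq_def by simp
    have PS: "psdf n (\<lambda>x y. A x y - A x n * A n y / A n n)" using psdf_schur[OF Suc.prems False] .
    from Suc.IH[OF PS] obtain L :: nat and G where
      G: "\<forall>x<n. \<forall>y<n. A x y - A x n * A n y / A n n = (\<Sum>l<L. G l x * cnj (G l y))" by (elim exE) (erule that)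
    define G' where "G' l x = (if l < L then (if x < n then G l x else 0) else A x n / sq)" for l x
    have fin: "\<forall>x<Suc n. \<forall>y<Suc n. A x y = (\<Sum>l<Suc L. G' l x * cnj (G' l y))"
    proof (intro allI impI)
      fix x y assume x: "x < Suc n" and y: "y < Suc n"
      have hy: "cnj (A y n) = A n y" using psdf_herm[OF Suc.prems y nn] by simp
      have "G' L x * cnj (G' L y) = A x n / sq * (cnj (A y n) / cnj sq)"
        unfolding G'_def by simp
      also have "\<dots> = A x n * A n y / (sq * sq)" unfolding hy cnjsq by simp
      finally have last: "G' L x * cnj (G' L y) = A x n * A n y / d" unfolding sqsq .
      have S: "(\<Sum>l<L. G' l x * cnj (G' l y)) = (\<Sum>l<L. (if x < n \<and> y < n then G l x * cnj (G l y) else 0))"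
        unfolding G'_def by (rule sum.cong) auto
      have sum: "(\<Sum>l<Suc L. G' l x * cnj (G' l y)) = (\<Sum>l<L. (if x < n \<and> y < n then G l x * cnj (G l y) else 0)) + A x n * A n y / d"
        using last S by simp
      show "A x y = (\<Sum>l<Suc L. G' l x * cnj (G' l y))"
      proof (cases "x < n \<and> y < n")
        case True
        then have "A x y - A x n * A n y / d = (\<Sum>l<L. G l x * cnj (G l y))" using G d_def by simp
        then show ?thesis unfolding sum using True by (simp add: algebra_simps)
      next
        case False
        then have "x = n \<or> y = n" using x y by auto
        then have "A x y = A x n * A n y / d" using d0 d_def by auto
        then show ?thesis unfolding sum if_not_P[OF False] by simp
      qed
    qed
    show ?thesis by (rule exI[where x="Suc L"], rule exI[where x=G'], rule fin)
  qed
qed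


lemma sum_add_split:
  fixes f :: "nat \<Rightarrow> 'a::comm_monoid_add"
  shows "(\<Sum>l<L+m. f l) = (\<Sum>l<L. f l) + (\<Sum>x<m. f (L+x))"
  by (induct m) (simp_all add: add.assoc)

lemma Kpsi:
  assumes U: "unitary_mat m U"
  shows "(\<Sum>a<m. (\<Sum>x<m. U $$ (r,x) * f x * cnj (U $$ (a,x))) * (\<Sum>y<m. c y * U $$ (a,y))) = (\<Sum>x<m. U $$ (r,x) * f x * c x)"
proof -
  have "(\<Sum>a<m. (\<Sum>x<m. U $$ (r,x) * f x * cnj (U $$ (a,x))) * (\<Sum>y<m. c y * U $$ (a,y))) =
        (\<Sum>a<m. \<Sum>x<m. \<Sum>y<m. U $$ (r,x) * f x * cnj (U $$ (a,x)) * (c y * U $$ (a,y)))"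
    by (simp add: sum_product)
  also have "\<dots> = (\<Sum>x<m. \<Sum>y<m. \<Sum>a<m. U $$ (r,x) * f x * cnj (U $$ (a,x)) * (c y * U $$ (a,y)))"
    by (rule sum_rot3)
  also have "\<dots> = (\<Sum>x<m. \<Sum>y<m. U $$ (r,x) * f x * c y * (\<Sum>a<m. cnj (U $$ (a,x)) * U $$ (a,y)))"
    by (intro sum.cong refl) (simp add: sum_distrib_left mult_ac)
  also have "\<dots> = (\<Sum>x<m. \<Sum>y<m. (if y = x then U $$ (r,x) * f x * c x else 0))"
    using unit_orth1[OF U] by (intro sum.cong refl) auto
  also have "\<dots> = (\<Sum>x<m. U $$ (r,x) * f x * c x)" by simp
  finally show ?thesis .
qed

lemma psdf_S:
  assumes U: "unitary_mat m U" and P: "psd_mat m \<sigma>"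
  shows "psdf m (\<lambda>x y. \<Sum>i<m. \<Sum>j<m. cnj (U $$ (i,x)) * \<sigma> $$ (i,j) * U $$ (j,y))"
  unfolding psdf_def
proof
  fix v :: "nat \<Rightarrow> complex"
  define w where "w i = (\<Sum>x<m. U $$ (i,x) * v x)" for i
  have "qf m (\<lambda>x y. \<Sum>i<m. \<Sum>j<m. cnj (U $$ (i,x)) * \<sigma> $$ (i,j) * U $$ (j,y)) v =
     (\<Sum>x<m. \<Sum>y<m. \<Sum>i<m. \<Sum>j<m. cnj (v x) * (cnj (U $$ (i,x)) * \<sigma> $$ (i,j) * U $$ (j,y)) * v y)"
    unfolding qf_def by (simp only: mid_sum2)
  also have "\<dots> = (\<Sum>i<m. \<Sum>j<m. \<Sum>x<m. \<Sum>y<m. cnj (v x) * (cnj (U $$ (i,x)) * \<sigma> $$ (i,j) * U $$ (j,y)) * v y)"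
    by (rule sum4_swap)
  also have "\<dots> = (\<Sum>i<m. \<Sum>j<m. cnj (w i) * \<sigma> $$ (i,j) * w j)"
  proof (intro sum.cong refl)
    fix i j
    have "cnj (w i) * \<sigma> $$ (i,j) * w j = (\<Sum>x<m. cnj (U $$ (i,x)) * cnj (v x)) * \<sigma> $$ (i,j) * (\<Sum>y<m. U $$ (j,y) * v y)"
      unfolding w_def by simp
    also have "\<dots> = (\<Sum>x<m. \<Sum>y<m. cnj (U $$ (i,x)) * cnj (v x) * \<sigma> $$ (i,j) * (U $$ (j,y) * v y))"
      by (rule prod3_sum)
    finally show "(\<Sum>x<m. \<Sum>y<m. cnj (v x) * (cnj (U $$ (i,x)) * \<sigma> $$ (i,j) * U $$ (j,y)) * v y) = cnj (w i) * \<sigma> $$ (i,j) * w j"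
      by (simp add: mult_ac)
  qed
  finally have e: "qf m (\<lambda>x y. \<Sum>i<m. \<Sum>j<m. cnj (U $$ (i,x)) * \<sigma> $$ (i,j) * U $$ (j,y)) v = (\<Sum>i<m. \<Sum>j<m. cnj (w i) * \<sigma> $$ (i,j) * w j)" .
  show "qf m (\<lambda>x y. \<Sum>i<m. \<Sum>j<m. cnj (U $$ (i,x)) * \<sigma> $$ (i,j) * U $$ (j,y)) v \<in> \<real> \<and>
    0 \<le> Re (qf m (\<lambda>x y. \<Sum>i<m. \<Sum>j<m. cnj (U $$ (i,x)) * \<sigma> $$ (i,j) * U $$ (j,y)) v)"
    unfolding e by (rule psd_fun[OF P])
qed

theorem corollary1:
  fixes m :: nat and H U \<sigma> :: "complex mat"
  assumes "hermitian_mat m H"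
    and "unitary_mat m U"
    and "\<forall>x<m. \<exists>e. H *\<^sub>v col U x = e \<cdot>\<^sub>v col U x"
    and "density_mat m \<sigma>"
  shows "let p = (\<lambda>x. \<Sum>i<m. \<Sum>j<m. cnj (U $$ (i,x)) * \<sigma> $$ (i,j) * U $$ (j,x));
             \<psi> = vec m (\<lambda>i. \<Sum>x<m. complex_of_real (sqrt (Re (p x))) * U $$ (i,x))
         in \<exists>\<E>. channel m \<E> \<and> time_cov m H \<E> \<and> \<E> (ket_bra \<psi>) = \<sigma>"
proof -
  have Hc: "H \<in> carrier_mat m m" using assms(1) unfolding hermitian_mat_def by auto
  have UU: "unitary_mat m U" by (rule assms(2))
  have Uc: "U \<in> carrier_mat m m" and U1: "adj U * U = 1\<^sub>m m" and U2: "U * adj U = 1\<^sub>m m"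
    using assms(2) unfolding unitary_mat_def by auto
  have aUc: "adj U \<in> carrier_mat m m" using Uc by simp
  have Ps: "psd_mat m \<sigma>" using assms(4) unfolding density_mat_def by auto
  have sc: "\<sigma> \<in> carrier_mat m m" using Ps unfolding psd_mat_def by auto
  have "\<forall>x. \<exists>c. x < m \<longrightarrow> H *\<^sub>v col U x = c \<cdot>\<^sub>v col U x" using assms(3) by blast
  from choice[OF this] obtain e where e: "\<And>x. x < m \<Longrightarrow> H *\<^sub>v col U x = e x \<cdot>\<^sub>v col U x" by blast
  have HU: "H * U = U * dg m e"
  proof (rule eq_matI)
    fix i j assume "i < dim_row (U * dg m e)" "j < dim_col (U * dg m e)"
    then have i: "i < m" and j: "j < m" using Uc by auto
    have "(H * U) $$ (i,j) = (H *\<^sub>v col U j) $ i" using Hc Uc i j by simp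
    also have "\<dots> = e j * U $$ (i,j)" using e[OF j] Uc i j by simp
    also have "\<dots> = (\<Sum>k<m. U $$ (i,k) * dg m e $$ (k,j))"
    proof -
      have "(\<Sum>k<m. U $$ (i,k) * dg m e $$ (k,j)) = (\<Sum>k<m. (if k = j then U $$ (i,j) * e j else 0))"
        using j by (intro sum.cong refl) auto
      then show ?thesis using j by simp
    qed
    also have "\<dots> = (U * dg m e) $$ (i,j)" using mult_entry[OF Uc dg_carrier i j] by simp
    finally show "(H * U) $$ (i,j) = (U * dg m e) $$ (i,j)" .
  qed (use Hc Uc in auto)
  have HW: "H = U * dg m e * adj U"
  proof -
    have "H = H * (U * adj U)" using U2 Hc by simp
    also have "\<dots> = (H * U) * adj U" using Hc Uc aUc by (simp add: assoc_mult_mat[of _ m m _ m _ m])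
    finally show ?thesis unfolding HU .
  qed
  define z where "z t x = exp (- \<i> * complex_of_real t * e x)" for t x
  have Vt: "time_evol H t = U * dg m (z t) * adj U" for t
    unfolding time_evol_def HW Wm_smult[OF Uc] mexp_Wm[OF UU] z_def by simp
  define S where "S x y = (\<Sum>i<m. \<Sum>j<m. cnj (U $$ (i,x)) * \<sigma> $$ (i,j) * U $$ (j,y))" for x y
  have PS: "psdf m S" unfolding S_def by (rule psdf_S[OF UU Ps])
  obtain L :: nat and G where G: "\<forall>x<m. \<forall>y<m. S x y = (\<Sum>l<L. G l x * cnj (G l y))"
    using chol[OF PS] by (elim exE) (erule that)
  define sp where "sp x = complex_of_real (sqrt (Re (S x x)))" for x
  have Sre: "S x x = complex_of_real (Re (S x x))" "0 \<le> Re (S x x)" if "x < m" for x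
    using psdf_diag[OF PS that] of_real_Re by auto
  have spsp: "sp x * sp x = S x x" if "x < m" for x
  proof -
    have "sqrt (Re (S x x)) * sqrt (Re (S x x)) = Re (S x x)" using Sre(2)[OF that] by simp
    then have "complex_of_real (sqrt (Re (S x x)) * sqrt (Re (S x x))) = S x x" using Sre(1)[OF that] by simp
    then show ?thesis unfolding sp_def by (simp only: of_real_mult)
  qed
  have cnjsp: "cnj (sp x) = sp x" for x unfolding sp_def by simp
  have sp0: "sp x = 0 \<longleftrightarrow> S x x = 0" if "x < m" for x
    using spsp[OF that] by auto
  have Szero1: "S x y = 0" if "x < m" "y < m" "sp y = 0" for x y
    using psdf_zero_diag[OF PS that(1,2)] sp0[OF that(2)] that(3) by simp
  have Szero2: "S x y = 0" if "x < m" "y < m" "sp x = 0" for x y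
  proof -
    have "S y x = 0" using psdf_zero_diag[OF PS that(2,1)] sp0[OF that(1)] that(3) by simp
    moreover have "S x y = cnj (S y x)" using psdf_herm[OF PS that(2,1)] .
    ultimately show ?thesis by simp
  qed
  define h where "h l x = (if l < L then G l x / sp x else (if l = L + x \<and> sp x = 0 then 1 else 0))" for l x
  define N where "N = L + m"
  have hval: "h (L+z) x = (if z = x \<and> sp x = 0 then 1 else 0)" for z x
    unfolding h_def by auto
  have key1: "sp x * sp y * (\<Sum>l<N. h l x * cnj (h l y)) = S x y" if x: "x < m" and y: "y < m" for x y
  proof -
    have sec: "(\<Sum>z<m. h (L+z) x * cnj (h (L+z) y)) = (if x = y \<and> sp x = 0 then 1 else 0)"
    proof -
      have "(\<Sum>z<m. h (L+z) x * cnj (h (L+z) y)) = (\<Sum>z<m. (if z = x then (if x = y \<and> sp x = 0 then 1 else 0) else 0))"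
        unfolding hval by (intro sum.cong refl) auto
      then show ?thesis using x by simp
    qed
    have "(\<Sum>l<N. h l x * cnj (h l y)) = (\<Sum>l<L. G l x / sp x * cnj (G l y / sp y)) + (if x = y \<and> sp x = 0 then 1 else 0)"
      unfolding N_def sum_add_split sec unfolding h_def by simp
    show ?thesis
    proof (cases "sp x = 0 \<or> sp y = 0")
      case True
      then have "S x y = 0" using Szero1[OF x y] Szero2[OF x y] by blast
      then show ?thesis using True by auto
    next
      case False
      have "sp x * sp y * (\<Sum>l<N. h l x * cnj (h l y)) = sp x * sp y * (\<Sum>l<L. G l x / sp x * cnj (G l y / sp y))"
        using \<open>(\<Sum>l<N. h l x * cnj (h l y)) = _\<close> False by simp
      also have "\<dots> = (\<Sum>l<L. G l x * cnj (G l y))"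
        using False cnjsp by (simp add: sum_distrib_left field_simps)
      also have "\<dots> = S x y" using G x y by simp
      finally show ?thesis .
    qed
  qed
  have key2: "(\<Sum>l<N. cnj (h l x) * h l x) = 1" if x: "x < m" for x
  proof -
    have sec: "(\<Sum>z<m. cnj (h (L+z) x) * h (L+z) x) = (if sp x = 0 then 1 else 0)"
    proof -
      have "(\<Sum>z<m. cnj (h (L+z) x) * h (L+z) x) = (\<Sum>z<m. (if z = x then (if sp x = 0 then 1 else 0) else 0))"
        unfolding hval by (intro sum.cong refl) auto
      then show ?thesis using x by simp
    qed
    have e1: "(\<Sum>l<N. cnj (h l x) * h l x) = (\<Sum>l<L. cnj (G l x / sp x) * (G l x / sp x)) + (if sp x = 0 then 1 else 0)"
      unfolding N_def sum_add_split sec unfolding h_def by simp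
    show ?thesis
    proof (cases "sp x = 0")
      case True
      then show ?thesis using e1 by simp
    next
      case False
      have "(\<Sum>l<L. cnj (G l x / sp x) * (G l x / sp x)) = (\<Sum>l<L. G l x * cnj (G l x)) / (sp x * sp x)"
        using cnjsp by (simp add: sum_divide_distrib field_simps)
      also have "\<dots> = 1" using G x spsp[OF x] False sp0[OF x] by simp
      finally show ?thesis using e1 False by simp
    qed
  qed
  define K where "K l = U * dg m (h l) * adj U" for l
  have Kc: "\<forall>l<N. K l \<in> carrier_mat m m" unfolding K_def using Uc by (auto intro!: mult_carrier_mat)
  define \<E> where "\<E> = kch m N K"
  have nrm: "\<forall>a<m. \<forall>b<m. (\<Sum>l<N. \<Sum>r<m. cnj (K l $$ (r,b)) * K l $$ (r,a)) = (if a = b then 1 else 0)"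
  proof (intro allI impI)
    fix a b assume a: "a < m" and b: "b < m"
    have Kl: "K l \<in> carrier_mat m m" for l unfolding K_def using Uc by (auto intro!: mult_carrier_mat)
    have e1: "(\<Sum>r<m. cnj (K l $$ (r,b)) * K l $$ (r,a)) = (\<Sum>x<m. U $$ (b,x) * (cnj (h l x) * h l x) * cnj (U $$ (a,x)))" for l
    proof -
      have "(\<Sum>r<m. cnj (K l $$ (r,b)) * K l $$ (r,a)) = (adj (K l) * K l) $$ (b,a)"
        unfolding mult_entry[OF adj_carrier[OF Kl] Kl b a] using Kl[of l] b by (intro sum.cong refl) simp
      also have "adj (K l) * K l = U * dg m (\<lambda>x. cnj (h l x) * h l x) * adj U"
        unfolding K_def adj_Wm[OF Uc] Wm_mult[OF UU] ..
      finally show ?thesis using Wm_entry[OF Uc b a] by simp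
    qed
    have "(\<Sum>l<N. \<Sum>r<m. cnj (K l $$ (r,b)) * K l $$ (r,a)) = (\<Sum>l<N. \<Sum>x<m. U $$ (b,x) * (cnj (h l x) * h l x) * cnj (U $$ (a,x)))"
      using e1 by simp
    also have "\<dots> = (\<Sum>x<m. \<Sum>l<N. U $$ (b,x) * (cnj (h l x) * h l x) * cnj (U $$ (a,x)))"
      by (rule sum.swap)
    also have "\<dots> = (\<Sum>x<m. U $$ (b,x) * (\<Sum>l<N. cnj (h l x) * h l x) * cnj (U $$ (a,x)))"
      by (simp add: sum_distrib_left sum_distrib_right)
    also have "\<dots> = (\<Sum>x<m. U $$ (b,x) * cnj (U $$ (a,x)))" using key2 by simp
    also have "\<dots> = (if a = b then 1 else 0)" using unit_orth2[OF UU b a] by auto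
    finally show "(\<Sum>l<N. \<Sum>r<m. cnj (K l $$ (r,b)) * K l $$ (r,a)) = (if a = b then 1 else 0)" .
  qed
  have chan: "channel m \<E>"
    unfolding channel_def \<E>_def
    using kch_linear[OF Kc] kch_trace[OF Kc _ nrm] kch_cp[OF Kc] by auto
  have cov: "time_cov m H \<E>"
    unfolding time_cov_def
  proof (intro allI impI)
    fix t :: real and \<rho> assume "density_mat m \<rho>"
    then have Rc: "\<rho> \<in> carrier_mat m m" unfolding density_mat_def psd_mat_def by auto
    have Vc: "time_evol H t \<in> carrier_mat m m" unfolding Vt using Uc by (auto intro!: mult_carrier_mat)
    have comm: "\<forall>l<N. K l * time_evol H t = time_evol H t * K l \<and> adj (time_evol H t) * adj (K l) = adj (K l) * adj (time_evol H t)"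
      unfolding Vt K_def adj_Wm[OF Uc] Wm_mult[OF UU] by (simp add: mult.commute)
    show "\<E> (time_evol H t * \<rho> * adj (time_evol H t)) = time_evol H t * \<E> \<rho> * adj (time_evol H t)"
      unfolding \<E>_def by (rule kch_cov[OF Kc Vc Rc comm])
  qed
  define \<psi> where "\<psi> = vec m (\<lambda>i. \<Sum>x<m. sp x * U $$ (i,x))"
  have kbc: "ket_bra \<psi> \<in> carrier_mat m m" unfolding ket_bra_def \<psi>_def by simp
  have Kpsi_l: "(\<Sum>a<m. K l $$ (r,a) * \<psi> $ a) = (\<Sum>x<m. U $$ (r,x) * h l x * sp x)" if r: "r < m" for l r
  proof -
    have "(\<Sum>a<m. K l $$ (r,a) * \<psi> $ a) = (\<Sum>a<m. (\<Sum>x<m. U $$ (r,x) * h l x * cnj (U $$ (a,x))) * (\<Sum>y<m. sp y * U $$ (a,y)))"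
      unfolding K_def \<psi>_def using Wm_entry[OF Uc r] by (intro sum.cong refl) simp
    also have "\<dots> = (\<Sum>x<m. U $$ (r,x) * h l x * sp x)" by (rule Kpsi[OF UU])
    finally show ?thesis .
  qed
  have tgt: "\<E> (ket_bra \<psi>) = \<sigma>"
  proof (rule eq_matI)
    fix r s assume "r < dim_row \<sigma>" "s < dim_col \<sigma>"
    then have r: "r < m" and s: "s < m" using sc by auto
    have "\<E> (ket_bra \<psi>) $$ (r,s) = (\<Sum>l<N. (\<Sum>a<m. K l $$ (r,a) * \<psi> $ a) * cnj (\<Sum>b<m. K l $$ (s,b) * \<psi> $ b))"
      unfolding \<E>_def index_kch[OF r s]
    proof (intro sum.cong refl)
      fix l assume "l \<in> {..<N}"
      then have Kl: "K l \<in> carrier_mat m m" using Kc by auto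
      have "(K l * ket_bra \<psi> * adj (K l)) $$ (r,s) = (\<Sum>a<m. \<Sum>b<m. K l $$ (r,a) * ket_bra \<psi> $$ (a,b) * cnj (K l $$ (s,b)))"
        by (rule kent[OF Kl kbc r s])
      also have "\<dots> = (\<Sum>a<m. \<Sum>b<m. (K l $$ (r,a) * \<psi> $ a) * cnj (K l $$ (s,b) * \<psi> $ b))"
        unfolding ket_bra_def \<psi>_def by (intro sum.cong refl) (simp add: mult_ac)
      also have "\<dots> = (\<Sum>a<m. K l $$ (r,a) * \<psi> $ a) * cnj (\<Sum>b<m. K l $$ (s,b) * \<psi> $ b)"
        by (simp add: sum_product)
      finally show "(K l * ket_bra \<psi> * adj (K l)) $$ (r,s) = (\<Sum>a<m. K l $$ (r,a) * \<psi> $ a) * cnj (\<Sum>b<m. K l $$ (s,b) * \<psi> $ b)" .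
    qed
    also have "\<dots> = (\<Sum>l<N. (\<Sum>x<m. U $$ (r,x) * h l x * sp x) * cnj (\<Sum>y<m. U $$ (s,y) * h l y * sp y))"
      using Kpsi_l[OF r] Kpsi_l[OF s] by simp
    also have "\<dots> = (\<Sum>l<N. \<Sum>x<m. \<Sum>y<m. U $$ (r,x) * h l x * sp x * cnj (U $$ (s,y) * h l y * sp y))"
      by (simp add: sum_product cnj_sum)
    also have "\<dots> = (\<Sum>x<m. \<Sum>y<m. \<Sum>l<N. U $$ (r,x) * h l x * sp x * cnj (U $$ (s,y) * h l y * sp y))"
      by (rule sum_rot3)
    also have "\<dots> = (\<Sum>x<m. \<Sum>y<m. U $$ (r,x) * (sp x * sp y * (\<Sum>l<N. h l x * cnj (h l y))) * cnj (U $$ (s,y)))"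
      using cnjsp by (intro sum.cong refl) (simp add: sum_distrib_left sum_distrib_right mult_ac)
    also have "\<dots> = (\<Sum>x<m. \<Sum>y<m. U $$ (r,x) * S x y * cnj (U $$ (s,y)))"
      using key1 by (intro sum.cong refl) simp
    also have "\<dots> = (U * (adj U * \<sigma> * U) * adj U) $$ (r,s)"
    proof -
      have Sc: "adj U * \<sigma> * U \<in> carrier_mat m m" using mult_carrier_mat[OF mult_carrier_mat[OF aUc sc] Uc] .
      have "(adj U * \<sigma> * U) $$ (x,y) = S x y" if "x < m" "y < m" for x y
        unfolding S_def using triple_entry[OF aUc sc Uc that] Uc that by (auto intro!: sum.cong)
      then show ?thesis using conj_entry[OF Uc Sc r s] by (auto intro!: sum.cong)
    qed
    also have "U * (adj U * \<sigma> * U) * adj U = \<sigma>"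
    proof -
      have "U * (adj U * \<sigma> * U) * adj U = (U * adj U) * \<sigma> * (U * adj U)"
        using Uc aUc sc by (simp add: assoc_mult_mat[of _ m m _ m _ m] mult_carrier_mat[of _ m m _ m])
      then show ?thesis using U2 sc by simp
    qed
    finally show "\<E> (ket_bra \<psi>) $$ (r,s) = \<sigma> $$ (r,s)" .
  qed (use sc in \<open>auto simp: \<E>_def\<close>)
  show ?thesis
    unfolding Let_def
    using chan cov tgt unfolding \<psi>_def sp_def S_def by blast
qed

end
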